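(* Let $\mathbf f\in H^{3/2}(\mathbb{R}/\mathbb{Z},\mathbb{R}^n)$, $m\ge2$, and $0\le\theta_1<\dots<\theta_m<1$, with indices taken cyclically ($\theta_{k+m}=\theta_k+1$), and assume the equilateral condition $\|\Delta_k\mathbf f\|=L_m/m$ for all $k=1,\dots,m$, where $L_m=\sum_{k=1}^m\|\Delta_k\mathbf f\|$. Then for every $i$, \[ \|\Delta_i\mathbf f-\Delta_{i+1}\mathbf f\|\le 2\,(\theta_{i+2}-\theta_i)\,[\dot{\mathbf f}]_{H^{1/2}([\theta_i,\theta_{i+2}]^2)} . \]
   Context: $\Delta_i^j\mathbf f=\mathbf f(\theta_j)-\mathbf f(\theta_i)$ and $\Delta_i\mathbf f=\Delta_i^{i+1}\mathbf f$, where $\mathbf f$ is regarded as a $1$-periodic function on $\mathbb{R}$. For an interval $[a,b]\subset\mathbb{R}$ and a $1$-periodic $\mathbb{R}^n$-valued function $\mathbf u$, $[\mathbf u]_{H^{1/2}([a,b]^2)}=\Big(\int_a^b\int_a^b\frac{\|\mathbf u(\theta)-\mathbf u(\theta')\|^2}{|\theta-\theta'|^2}d\theta\,d\theta'\Big)^{1/2}$. *)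

theory Defs
  imports "HOL-Analysis.Analysis"
begin

text \<open>Distance on the circle R/Z (for arguments in [0,1]).\<close>
definition circ_dist :: "real \<Rightarrow> real \<Rightarrow> real" where
  "circ_dist x y = min \<bar>x - y\<bar> (1 - \<bar>x - y\<bar>)"

definition H12_torus_sq :: "(real \<Rightarrow> 'a::real_normed_vector) \<Rightarrow> ennreal" where
  "H12_torus_sq u =
     (\<integral>\<^sup>+ z \<in> {0..1::real} \<times> {0..1::real}.
        ennreal ((norm (u (fst z) - u (snd z)))\<^sup>2 / (circ_dist (fst z) (snd z))\<^sup>2)
      \<partial>(lborel \<Otimes>\<^sub>M lborel))"

definition H12_sq :: "real \<Rightarrow> real \<Rightarrow> (real \<Rightarrow> 'a::real_normed_vector) \<Rightarrow> ennreal" where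
  "H12_sq a b u =
     (\<integral>\<^sup>+ z \<in> {a..b} \<times> {a..b}.
        ennreal ((norm (u (fst z) - u (snd z)))\<^sup>2 / (fst z - snd z)\<^sup>2)
      \<partial>(lborel \<Otimes>\<^sub>M lborel))"

definition H12_seminorm :: "real \<Rightarrow> real \<Rightarrow> (real \<Rightarrow> 'a::real_normed_vector) \<Rightarrow> real" where
  "H12_seminorm a b u = sqrt (enn2real (H12_sq a b u))"

text \<open>f \<in> H^{3/2}(R/Z, R^n) with (weak) derivative g: f is 1-periodic and the
  integral of g, g is 1-periodic, measurable, in L^2 of a period, and
  g \<in> H^{1/2}(R/Z).\<close>
definition H32_with_deriv :: "(real \<Rightarrow> real ^ 'n) \<Rightarrow> (real \<Rightarrow> real ^ 'n) \<Rightarrow> bool" where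
  "H32_with_deriv f g \<longleftrightarrow>
     (\<forall>x. f (x + 1) = f x) \<and> (\<forall>x. g (x + 1) = g x) \<and>
     g \<in> borel_measurable lborel \<and>
     (\<integral>\<^sup>+ x \<in> {0..1}. ennreal ((norm (g x))\<^sup>2) \<partial>lborel) < \<infinity> \<and>
     (\<forall>a b. a \<le> b \<longrightarrow> (g has_integral (f b - f a)) {a..b}) \<and>
     H12_torus_sq g < \<infinity>"

text \<open>Cyclic extension of nodes theta_1..theta_m: theta_{k+m} = theta_k + 1 (k \<ge> 1).\<close>
definition theta_ext :: "nat \<Rightarrow> (nat \<Rightarrow> real) \<Rightarrow> nat \<Rightarrow> real" where
  "theta_ext m \<theta> k = \<theta> ((k - 1) mod m + 1) + real ((k - 1) div m)"

definition Delta :: "nat \<Rightarrow> (nat \<Rightarrow> real) \<Rightarrow> (real \<Rightarrow> 'a::real_normed_vector) \<Rightarrow> nat \<Rightarrow> 'a" where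
  "Delta m \<theta> f i = f (theta_ext m \<theta> (i + 1)) - f (theta_ext m \<theta> i)"

end

theory Submission
  imports Defs
begin

lemma per_nat: assumes "\<forall>x. g (x + 1) = g x" shows "g (x + real n) = g x"
proof (induction n arbitrary: x)
  case (Suc n) then show ?case using assms by (metis add.commute add.left_commute of_nat_Suc)
qed simp

lemma per_int: assumes "\<forall>x. g (x + 1) = g x" shows "g (x + real_of_int k) = g x"
proof (cases "k \<ge> 0")
  case True then show ?thesis using per_nat[OF assms, of x "nat k"] by simp
next
  case False
  then have "g (x + real_of_int k + real (nat (-k))) = g (x + real_of_int k)" using per_nat[OF assms] by blast
  then show ?thesis using False by simp
qed

lemma shift1: fixes h :: "real \<Rightarrow> ennreal" assumes [measurable]: "h \<in> borel_measurable borel"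
  shows "(\<integral>\<^sup>+x. h x \<partial>lborel) = (\<integral>\<^sup>+x. h (t + x) \<partial>lborel)"
  using nn_integral_real_affine[OF assms, of 1 t] by simp

lemma shift2: fixes h :: "real \<times> real \<Rightarrow> ennreal" assumes [measurable]: "h \<in> borel_measurable borel"
  shows "(\<integral>\<^sup>+z. h z \<partial>(lborel \<Otimes>\<^sub>M lborel)) = (\<integral>\<^sup>+z. h (t + z) \<partial>(lborel \<Otimes>\<^sub>M lborel))"
proof -
  have "(\<integral>\<^sup>+z. h z \<partial>(lborel::(real\<times>real) measure)) = (\<integral>\<^sup>+z. h z \<partial>(distr lborel borel ((+) t)))"
    by (simp add: lborel_distr_plus)
  also have "\<dots> = (\<integral>\<^sup>+z. h (t + z) \<partial>lborel)"
    by (subst nn_integral_distr) auto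
  finally show ?thesis by (simp add: lborel_prod)
qed



lemma L2loc:
  fixes g :: "real \<Rightarrow> 'a::euclidean_space"
  assumes gm[measurable]: "g \<in> borel_measurable lborel" and per: "\<forall>x. g (x + 1) = g x"
    and L2: "(\<integral>\<^sup>+ x \<in> {0..1}. ennreal ((norm (g x))\<^sup>2) \<partial>lborel) < \<infinity>"
  shows "(\<integral>\<^sup>+ x \<in> {p..q}. ennreal ((norm (g x))\<^sup>2) \<partial>lborel) < \<infinity>"
proof -
  let ?K = "{floor p..floor q}"
  have pt: "ennreal ((norm (g x))\<^sup>2) * indicator {p..q} x
      \<le> (\<Sum>k\<in>?K. ennreal ((norm (g x))\<^sup>2) * indicator {real_of_int k..real_of_int k + 1} x)" for x
  proof (cases "x \<in> {p..q}")
    case True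
    then have "floor x \<in> ?K" by (auto intro: floor_mono)
    moreover have "x \<in> {real_of_int (floor x)..real_of_int (floor x) + 1}" by (simp; linarith)
    ultimately have "ennreal ((norm (g x))\<^sup>2) * indicator {real_of_int (floor x)..real_of_int (floor x) + 1} x
       \<le> (\<Sum>k\<in>?K. ennreal ((norm (g x))\<^sup>2) * indicator {real_of_int k..real_of_int k + 1} x)"
      by (intro member_le_sum) auto
    then show ?thesis using True by simp
  qed simp
  have eq: "(\<integral>\<^sup>+ x. ennreal ((norm (g x))\<^sup>2) * indicator {real_of_int k..real_of_int k + 1} x \<partial>lborel)
      = (\<integral>\<^sup>+ x \<in> {0..1}. ennreal ((norm (g x))\<^sup>2) \<partial>lborel)" for k
  proof -
    have "(\<integral>\<^sup>+ x. ennreal ((norm (g x))\<^sup>2) * indicator {real_of_int k..real_of_int k + 1} x \<partial>lborel)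
      = (\<integral>\<^sup>+ x. ennreal ((norm (g (real_of_int k + x)))\<^sup>2) * indicator {real_of_int k..real_of_int k + 1} (real_of_int k + x) \<partial>lborel)"
      by (rule shift1) simp
    also have "\<dots> = (\<integral>\<^sup>+ x \<in> {0..1}. ennreal ((norm (g x))\<^sup>2) \<partial>lborel)"
      using per_int[OF per] by (intro nn_integral_cong) (auto simp: indicator_def add.commute)
    finally show ?thesis .
  qed
  have "(\<integral>\<^sup>+ x \<in> {p..q}. ennreal ((norm (g x))\<^sup>2) \<partial>lborel)
     \<le> (\<integral>\<^sup>+ x. (\<Sum>k\<in>?K. ennreal ((norm (g x))\<^sup>2) * indicator {real_of_int k..real_of_int k + 1} x) \<partial>lborel)"
    by (intro nn_integral_mono pt)
  also have "\<dots> = (\<Sum>k\<in>?K. (\<integral>\<^sup>+ x. ennreal ((norm (g x))\<^sup>2) * indicator {real_of_int k..real_of_int k + 1} x \<partial>lborel))"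
    by (rule nn_integral_sum) auto
  also have "\<dots> = (\<Sum>k\<in>?K. (\<integral>\<^sup>+ x \<in> {0..1}. ennreal ((norm (g x))\<^sup>2) \<partial>lborel))"
    using eq by simp
  also have "\<dots> < \<infinity>" using L2 by (simp add: ennreal_mult_less_top of_nat_less_top)
  finally show ?thesis .
qed

lemma L1loc:
  fixes g :: "real \<Rightarrow> 'a::euclidean_space"
  assumes gm[measurable]: "g \<in> borel_measurable lborel" and per: "\<forall>x. g (x + 1) = g x"
    and L2: "(\<integral>\<^sup>+ x \<in> {0..1}. ennreal ((norm (g x))\<^sup>2) \<partial>lborel) < \<infinity>"
  shows "(\<integral>\<^sup>+ x. ennreal (norm (g x)) * indicator {p..q} x \<partial>lborel) < \<infinity>"
proof -
  have "(\<integral>\<^sup>+ x. ennreal (norm (g x)) * indicator {p..q} x \<partial>lborel)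
     \<le> (\<integral>\<^sup>+ x. (indicator {p..q} x + ennreal ((norm (g x))\<^sup>2) * indicator {p..q} x) \<partial>lborel)"
  proof (intro nn_integral_mono)
    fix x
    have h: "2 * norm (g x) \<le> 1 + norm (g x) * norm (g x)" "0 \<le> norm (g x) * norm (g x)"
      using zero_le_power2[of "norm (g x) - 1"] by (simp_all add: power2_eq_square algebra_simps)
    have "norm (g x) \<le> 1 + (norm (g x))\<^sup>2" using h by (simp only: power2_eq_square)
    then show "ennreal (norm (g x)) * indicator {p..q} x \<le> indicator {p..q} x + ennreal ((norm (g x))\<^sup>2) * indicator {p..q} x"
    proof -
      have "ennreal (norm (g x)) \<le> ennreal (1 + (norm (g x))\<^sup>2)" by (rule ennreal_leI) fact
      also have "\<dots> = 1 + ennreal ((norm (g x))\<^sup>2)" by (simp add: ennreal_plus)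
      finally show ?thesis by (auto simp: indicator_def)
    qed
  qed
  also have "\<dots> = emeasure lborel {p..q} + (\<integral>\<^sup>+ x \<in> {p..q}. ennreal ((norm (g x))\<^sup>2) \<partial>lborel)"
    by (subst nn_integral_add) auto
  also have "\<dots> < \<infinity>" using L2loc[OF gm per L2, of p q] by (auto simp: emeasure_lborel_Icc_eq)
  finally show ?thesis .
qed



lemma circ_le:
  fixes x y :: real and j l :: int
  assumes "\<bar>x - y\<bar> \<le> 1" "x - j \<in> {0..1}" "y - l \<in> {0..1}"
  shows "circ_dist (x - j) (y - l) \<le> \<bar>x - y\<bar>"
proof -
  consider "j - l = 0" | "j - l \<ge> 1" | "j - l \<le> -1" by linarith
  then show ?thesis
  proof cases
    case 1 then have "real_of_int j = real_of_int l" by simp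
    then show ?thesis by (simp add: circ_dist_def)
  next
    case 2 then have "real_of_int j - real_of_int l \<ge> 1" by (metis of_int_1 of_int_diff of_int_le_iff)
    then show ?thesis using assms unfolding circ_dist_def by (auto simp: abs_if min_def)
  next
    case 3 then have "real_of_int j - real_of_int l \<le> -1" by (metis of_int_1 of_int_diff of_int_le_iff of_int_minus)
    then show ?thesis using assms unfolding circ_dist_def by (auto simp: abs_if min_def)
  qed
qed

lemma circ0:
  assumes per: "\<forall>x. g (x + 1) = g x" and "u \<in> {0..1}" "v \<in> {0..1}" "circ_dist u v = 0"
  shows "g u = g v"
proof -
  have "u = v \<or> (u = 0 \<and> v = 1) \<or> (u = 1 \<and> v = 0)" using assms(2-4) unfolding circ_dist_def
    by (auto simp: min_def abs_if split: if_splits)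
  moreover have "g 1 = g 0" using per[rule_format, of 0] by simp
  ultimately show ?thesis by auto
qed

lemma ptF:
  fixes g :: "real \<Rightarrow> 'a::real_normed_vector" and j l :: int and x y :: real
  assumes per: "\<forall>x. g (x + 1) = g x"
    and "\<bar>x - y\<bar> \<le> 1" "x - j \<in> {0..1}" "y - l \<in> {0..1}"
  shows "(norm (g x - g y))\<^sup>2 / (x - y)\<^sup>2 \<le> (norm (g (x - j) - g (y - l)))\<^sup>2 / (circ_dist (x - j) (y - l))\<^sup>2"
proof -
  have gx: "g (x - j) = g x" using per_int[OF per, of x "-j"] by simp
  have gy: "g (y - l) = g y" using per_int[OF per, of y "-l"] by simp
  have cl: "circ_dist (x - j) (y - l) \<le> \<bar>x - y\<bar>" using circ_le assms(2-4) by blast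
  show ?thesis
  proof (cases "circ_dist (x - j) (y - l) = 0")
    case True
    then have "g x = g y" using circ0[OF per assms(3,4)] gx gy by simp
    then show ?thesis by simp
  next
    case False
    have "circ_dist (x - j) (y - l) \<ge> 0" unfolding circ_dist_def using assms(3,4) by auto
    with False have pos: "circ_dist (x - j) (y - l) > 0" by simp
    have "(circ_dist (x - j) (y - l))\<^sup>2 \<le> (x - y)\<^sup>2"
      using cl pos by (metis abs_ge_zero power2_abs power_mono less_imp_le)
    moreover have c2: "0 < (circ_dist (x - j) (y - l))\<^sup>2" using pos by simp
    ultimately have d2: "0 < (x - y)\<^sup>2" by linarith
    show ?thesis unfolding gx gy
      by (intro divide_left_mono) (use c2 d2 \<open>(circ_dist (x - j) (y - l))\<^sup>2 \<le> (x - y)\<^sup>2\<close> in auto)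
  qed
qed



lemma H12fin:
  fixes g :: "real \<Rightarrow> 'a::euclidean_space"
  assumes gm: "g \<in> borel_measurable lborel" and per: "\<forall>x. g (x + 1) = g x"
    and tor: "H12_torus_sq g < \<infinity>" and ac: "a \<le> c" "c - a \<le> 1"
  shows "H12_sq a c g < \<infinity>"
proof -
  have gb[measurable]: "g \<in> borel_measurable borel" using gm by simp
  define T where "T z = ennreal ((norm (g (fst z) - g (snd z)))\<^sup>2 / (circ_dist (fst z) (snd z))\<^sup>2)
      * indicator ({0..1::real}\<times>{0..1::real}) z" for z :: "real \<times> real"
  have "T \<in> borel_measurable (lborel \<Otimes>\<^sub>M lborel)"
    unfolding T_def circ_dist_def by measurable
  then have Tm: "T \<in> borel_measurable borel" by (simp add: lborel_prod)
  have tor': "(\<integral>\<^sup>+z. T z \<partial>(lborel \<Otimes>\<^sub>M lborel)) = H12_torus_sq g"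
    unfolding H12_torus_sq_def T_def by simp
  define k where "k = floor a"
  define S where "S = {k, k+1} \<times> {k, k+1}"
  have pt: "ennreal ((norm (g (fst z) - g (snd z)))\<^sup>2 / (fst z - snd z)\<^sup>2) * indicator ({a..c}\<times>{a..c}) z
     \<le> (\<Sum>p\<in>S. T ((- real_of_int (fst p), - real_of_int (snd p)) + z))" for z
  proof (cases "z \<in> {a..c}\<times>{a..c}")
    case False then show ?thesis by simp
  next
    case True
    obtain x y where z: "z = (x, y)" by (cases z)
    have kx: "real_of_int k \<le> a" "a < real_of_int k + 1" unfolding k_def by linarith+
    define j where "j = (if x \<le> real_of_int k + 1 then k else k + 1)"
    define l where "l = (if y \<le> real_of_int k + 1 then k else k + 1)"
    have jS: "(j, l) \<in> S" unfolding S_def j_def l_def by auto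
    have xj: "x - j \<in> {0..1}" using True kx ac unfolding z j_def by auto
    have yl: "y - l \<in> {0..1}" using True kx ac unfolding z l_def by auto
    have xy: "\<bar>x - y\<bar> \<le> 1" using True ac unfolding z by auto
    have "ennreal ((norm (g (fst z) - g (snd z)))\<^sup>2 / (fst z - snd z)\<^sup>2) * indicator ({a..c}\<times>{a..c}) z
        = ennreal ((norm (g x - g y))\<^sup>2 / (x - y)\<^sup>2)" using True z by simp
    also have "\<dots> \<le> ennreal ((norm (g (x - j) - g (y - l)))\<^sup>2 / (circ_dist (x - j) (y - l))\<^sup>2)"
      by (rule ennreal_leI, rule ptF[OF per xy xj yl])
    also have "\<dots> = T ((- real_of_int (fst (j,l)), - real_of_int (snd (j,l))) + z)"
      using xj yl unfolding T_def z by simp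
    also have "\<dots> \<le> (\<Sum>p\<in>S. T ((- real_of_int (fst p), - real_of_int (snd p)) + z))"
      by (rule member_le_sum) (use jS S_def in auto)
    finally show ?thesis .
  qed
  have "H12_sq a c g \<le> (\<integral>\<^sup>+z. (\<Sum>p\<in>S. T ((- real_of_int (fst p), - real_of_int (snd p)) + z)) \<partial>(lborel \<Otimes>\<^sub>M lborel))"
    unfolding H12_sq_def by (intro nn_integral_mono pt)
  also have "\<dots> = (\<Sum>p\<in>S. (\<integral>\<^sup>+z. T ((- real_of_int (fst p), - real_of_int (snd p)) + z) \<partial>(lborel \<Otimes>\<^sub>M lborel)))"
    by (rule nn_integral_sum) (use Tm in \<open>auto simp: lborel_prod\<close>)
  also have "\<dots> = (\<Sum>p\<in>S. H12_torus_sq g)"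
    using shift2[OF Tm] tor' by simp
  also have "\<dots> < \<infinity>" using tor by (simp add: ennreal_mult_less_top of_nat_less_top)
  finally show ?thesis .
qed



lemma abs_le_nn:
  fixes \<psi> :: "real \<Rightarrow> real"
  assumes int: "integrable lborel (\<lambda>x. indicator S x * \<psi> x)" and hi: "(\<psi> has_integral I) S"
  shows "ennreal \<bar>I\<bar> \<le> (\<integral>\<^sup>+x. ennreal \<bar>\<psi> x\<bar> * indicator S x \<partial>lborel)"
proof -
  have e: "(\<lambda>x. indicator S x * \<psi> x) = (\<lambda>x. if x \<in> S then \<psi> x else 0)" by (auto simp: indicator_def)
  have 1: "((\<lambda>x. indicator S x * \<psi> x) has_integral integral\<^sup>L lborel (\<lambda>x. indicator S x * \<psi> x)) UNIV"
    by (rule has_integral_integral_lborel) fact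
  have 2: "((\<lambda>x. indicator S x * \<psi> x) has_integral I) UNIV"
    unfolding e has_integral_restrict_UNIV by fact
  have I: "I = integral\<^sup>L lborel (\<lambda>x. indicator S x * \<psi> x)" using has_integral_unique[OF 2 1] .
  have "\<bar>I\<bar> \<le> (\<integral>x. \<bar>indicator S x * \<psi> x\<bar> \<partial>lborel)" unfolding I by (rule integral_abs_bound)
  then have "ennreal \<bar>I\<bar> \<le> ennreal (\<integral>x. \<bar>indicator S x * \<psi> x\<bar> \<partial>lborel)" by (rule ennreal_leI)
  also have "\<dots> = (\<integral>\<^sup>+x. ennreal \<bar>indicator S x * \<psi> x\<bar> \<partial>lborel)"
    by (rule nn_integral_eq_integral[symmetric]) (use int in auto)
  also have "\<dots> = (\<integral>\<^sup>+x. ennreal \<bar>\<psi> x\<bar> * indicator S x \<partial>lborel)"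
    by (intro nn_integral_cong) (auto simp: indicator_def)
  finally show ?thesis .
qed

lemma final_alg:
  fixes X P W J H L :: real
  assumes "X\<^sup>2 \<le> P * W\<^sup>2" "P * W\<^sup>2 \<le> W * J" "J\<^sup>2 \<le> H * (L\<^sup>2 * P)" "P > 0" "W \<ge> 0" "J \<ge> 0"
    "H \<ge> 0" "L \<ge> 0" "X \<ge> 0"
  shows "X \<le> 2 * L * sqrt H"
proof (cases "W = 0")
  case True then show ?thesis using assms by (simp add: mult_nonneg_nonneg)
next
  case False
  with assms have Wp: "W > 0" by simp
  have "P * W \<le> J" using assms(2) Wp by (simp add: power2_eq_square)
  then have "(P * W)\<^sup>2 \<le> J\<^sup>2" using assms Wp by (intro power_mono) auto
  then have "P * (P * W\<^sup>2) \<le> P * (H * L\<^sup>2)" using assms(3) by (simp add: power2_eq_square algebra_simps)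
  then have "P * W\<^sup>2 \<le> H * L\<^sup>2" using assms(4) by simp
  then have "X\<^sup>2 \<le> (L * sqrt H)\<^sup>2" using assms by (simp add: power_mult_distrib mult.commute)
  then have "X \<le> L * sqrt H" by (rule power2_le_imp_le) (use assms in auto)
  also have "\<dots> \<le> 2 * L * sqrt H" using assms by auto
  finally show ?thesis .
qed

lemma vec_alg:
  fixes D1 D2 :: "'a::real_inner" and h1 h2 :: real
  assumes "h1 > 0" "h2 > 0" "norm D1 = norm D2"
  shows "(norm (D1 - D2))\<^sup>2 \<le> h1 * h2 * (norm ((1/h1) *\<^sub>R D1 - (1/h2) *\<^sub>R D2))\<^sup>2"
proof -
  define ll where "ll = D1 \<bullet> D1"
  define ip where "ip = D1 \<bullet> D2"
  have d2: "D2 \<bullet> D2 = ll" using assms(3) unfolding ll_def by (metis power2_norm_eq_inner)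
  have l: "(norm (D1 - D2))\<^sup>2 = 2 * ll - 2 * ip"
    unfolding power2_norm_eq_inner using d2 by (simp add: ll_def ip_def inner_diff_left inner_diff_right inner_commute)
  have r: "(norm ((1/h1) *\<^sub>R D1 - (1/h2) *\<^sub>R D2))\<^sup>2 = ll/h1\<^sup>2 + ll/h2\<^sup>2 - 2*ip/(h1*h2)"
    unfolding power2_norm_eq_inner using d2
    by (simp add: ll_def ip_def inner_diff_left inner_diff_right inner_commute power2_eq_square)
  have "h1 * h2 * (ll/h1\<^sup>2 + ll/h2\<^sup>2 - 2*ip/(h1*h2)) = 2 * ll - 2 * ip + ll * (h1 - h2)\<^sup>2 / (h1 * h2)"
    using assms by (simp add: field_simps power2_eq_square)
  moreover have "ll * (h1 - h2)\<^sup>2 / (h1 * h2) \<ge> 0" using assms unfolding ll_def by simp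
  ultimately show ?thesis using l r by simp
qed



lemma main_est:
  fixes f g :: "real \<Rightarrow> 'a::euclidean_space"
  assumes gm: "g \<in> borel_measurable lborel" and per: "\<forall>x. g (x + 1) = g x"
    and L2: "(\<integral>\<^sup>+ x \<in> {0..1}. ennreal ((norm (g x))\<^sup>2) \<partial>lborel) < \<infinity>"
    and tor: "H12_torus_sq g < \<infinity>"
    and hint: "\<forall>p q. p \<le> q \<longrightarrow> (g has_integral (f q - f p)) {p..q}"
    and ab: "a < b" and bc: "b < c" and ca: "c - a \<le> 1"
    and eqn: "norm (f b - f a) = norm (f c - f b)"
  shows "norm ((f b - f a) - (f c - f b)) \<le> 2 * (c - a) * H12_seminorm a c g"
proof -
  have gb[measurable]: "g \<in> borel_measurable borel" using gm by simp
  define h1 where "h1 = b - a"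
  define h2 where "h2 = c - b"
  define D1 where "D1 = f b - f a"
  define D2 where "D2 = f c - f b"
  define w where "w = (1/h1) *\<^sub>R D1 - (1/h2) *\<^sub>R D2"
  define \<phi> where "\<phi> x = w \<bullet> g x" for x
  define K where "K = w \<bullet> D2"
  have h1p: "h1 > 0" and h2p: "h2 > 0" using ab bc by (auto simp: h1_def h2_def)
  have \<phi>m[measurable]: "\<phi> \<in> borel_measurable borel" unfolding \<phi>_def by measurable
  have \<phi>has: "(\<phi> has_integral (w \<bullet> (f q - f p))) {p..q}" if "p \<le> q" for p q
  proof -
    have "((\<lambda>y. w \<bullet> y) \<circ> g has_integral (w \<bullet> (f q - f p))) {p..q}"
      by (rule has_integral_linear) (use hint that in \<open>auto intro: bounded_linear_inner_right\<close>)
    then show ?thesis by (simp add: \<phi>_def[abs_def] o_def)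
  qed
  have \<phi>int: "integrable lborel (\<lambda>x. indicator {p..q} x * \<phi> x)" for p q
  proof (rule integrableI_bounded)
    show "(\<lambda>x. indicator {p..q} x * \<phi> x) \<in> borel_measurable lborel" by simp
    have "(\<integral>\<^sup>+ x. ennreal (norm (indicator {p..q} x * \<phi> x)) \<partial>lborel)
        \<le> (\<integral>\<^sup>+ x. ennreal (norm w) * (ennreal (norm (g x)) * indicator {p..q} x) \<partial>lborel)"
    proof (intro nn_integral_mono)
      fix x
      have "\<bar>\<phi> x\<bar> \<le> norm w * norm (g x)" unfolding \<phi>_def by (rule Cauchy_Schwarz_ineq2)
      then have "ennreal \<bar>\<phi> x\<bar> \<le> ennreal (norm w) * ennreal (norm (g x))"
        by (simp add: ennreal_mult[symmetric] ennreal_leI)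
      then show "ennreal (norm (indicator {p..q} x * \<phi> x)) \<le> ennreal (norm w) * (ennreal (norm (g x)) * indicator {p..q} x)"
        by (auto simp: indicator_def)
    qed
    also have "\<dots> = ennreal (norm w) * (\<integral>\<^sup>+ x. ennreal (norm (g x)) * indicator {p..q} x \<partial>lborel)"
      by (rule nn_integral_cmult) simp
    also have "\<dots> < \<infinity>" using L1loc[OF gm per L2, of p q] by (simp add: ennreal_mult_less_top)
    finally show "(\<integral>\<^sup>+ x. ennreal (norm (indicator {p..q} x * \<phi> x)) \<partial>lborel) < \<infinity>" .
  qed
  have inner: "ennreal \<bar>h2 * \<phi> s - K\<bar> \<le> (\<integral>\<^sup>+t. ennreal \<bar>\<phi> s - \<phi> t\<bar> * indicator {b..c} t \<partial>lborel)" for s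
  proof (rule abs_le_nn)
    have "integrable lborel (\<lambda>t. \<phi> s * indicator {b..c} t - indicator {b..c} t * \<phi> t)"
      by (intro Bochner_Integration.integrable_diff integrable_mult_right integrable_real_indicator \<phi>int) (auto simp: emeasure_lborel_Icc_eq)
    then show "integrable lborel (\<lambda>t. indicator {b..c} t * (\<phi> s - \<phi> t))"
      by (simp add: algebra_simps)
    have "((\<lambda>t. \<phi> s - \<phi> t) has_integral (measure lborel {b..c} *\<^sub>R \<phi> s - w \<bullet> (f c - f b))) {b..c}"
      by (intro has_integral_diff has_integral_const_real \<phi>has) (use bc in auto)
    then show "((\<lambda>t. \<phi> s - \<phi> t) has_integral (h2 * \<phi> s - K)) {b..c}"
      using bc by (simp add: h2_def K_def D2_def)
  qed
  have Q: "h2 * (w \<bullet> D1) - h1 * K = h1 * h2 * (norm w)\<^sup>2"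
  proof -
    have "(norm w)\<^sup>2 = (1/h1) * (w \<bullet> D1) - (1/h2) * (w \<bullet> D2)"
      unfolding power2_norm_eq_inner by (simp add: w_def inner_diff_right)
    then show ?thesis using h1p h2p by (simp add: K_def field_simps)
  qed
  have outer: "ennreal (h1 * h2 * (norm w)\<^sup>2) \<le> (\<integral>\<^sup>+s. ennreal \<bar>h2 * \<phi> s - K\<bar> * indicator {a..b} s \<partial>lborel)"
  proof -
    have "ennreal \<bar>h2 * (w \<bullet> D1) - h1 * K\<bar> \<le> (\<integral>\<^sup>+s. ennreal \<bar>h2 * \<phi> s - K\<bar> * indicator {a..b} s \<partial>lborel)"
    proof (rule abs_le_nn)
      have "integrable lborel (\<lambda>s. h2 * (indicator {a..b} s * \<phi> s) - K * indicator {a..b} s)"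
        by (intro Bochner_Integration.integrable_diff integrable_mult_right integrable_real_indicator \<phi>int) (auto simp: emeasure_lborel_Icc_eq)
      then show "integrable lborel (\<lambda>s. indicator {a..b} s * (h2 * \<phi> s - K))"
        by (simp add: algebra_simps)
      have "((\<lambda>s. h2 * \<phi> s - K) has_integral (h2 * (w \<bullet> (f b - f a)) - measure lborel {a..b} *\<^sub>R K)) {a..b}"
        by (intro has_integral_diff has_integral_const_real has_integral_mult_right \<phi>has) (use ab in auto)
      then show "((\<lambda>s. h2 * \<phi> s - K) has_integral (h2 * (w \<bullet> D1) - h1 * K)) {a..b}"
        using ab by (simp add: h1_def D1_def)
    qed
    then show ?thesis unfolding Q using h1p h2p by simp
  qed
  define R where "R = {a..b} \<times> {b..c}"
  define G where "G z = ennreal \<bar>\<phi> (fst z) - \<phi> (snd z)\<bar> * indicator R z" for z :: "real \<times> real"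
  have Gm: "G \<in> borel_measurable (lborel \<Otimes>\<^sub>M lborel)" unfolding G_def R_def by measurable
  have ton: "(\<integral>\<^sup>+s. (\<integral>\<^sup>+t. ennreal \<bar>\<phi> s - \<phi> t\<bar> * indicator {b..c} t \<partial>lborel) * indicator {a..b} s \<partial>lborel)
      = (\<integral>\<^sup>+z. G z \<partial>(lborel \<Otimes>\<^sub>M lborel))"
  proof -
    have "(\<integral>\<^sup>+s. (\<integral>\<^sup>+t. ennreal \<bar>\<phi> s - \<phi> t\<bar> * indicator {b..c} t \<partial>lborel) * indicator {a..b} s \<partial>lborel)
      = (\<integral>\<^sup>+s. (\<integral>\<^sup>+t. G (s, t) \<partial>lborel) \<partial>lborel)"
    proof (intro nn_integral_cong)
      fix s
      show "(\<integral>\<^sup>+t. ennreal \<bar>\<phi> s - \<phi> t\<bar> * indicator {b..c} t \<partial>lborel) * indicator {a..b} s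
         = (\<integral>\<^sup>+t. G (s, t) \<partial>lborel)"
        by (subst nn_integral_multc[symmetric]) (auto simp: G_def R_def indicator_times mult_ac intro!: nn_integral_cong)
    qed
    also have "\<dots> = (\<integral>\<^sup>+z. G z \<partial>(lborel \<Otimes>\<^sub>M lborel))"
      by (rule lborel.nn_integral_fst[OF Gm])
    finally show ?thesis .
  qed
  define E where "E z = ennreal (norm (g (fst z) - g (snd z)) * indicator R z)" for z :: "real \<times> real"
  have Em: "E \<in> borel_measurable (lborel \<Otimes>\<^sub>M lborel)" unfolding E_def R_def by measurable
  define J where "J = (\<integral>\<^sup>+z. E z \<partial>(lborel \<Otimes>\<^sub>M lborel))"
  have A: "ennreal (h1 * h2 * (norm w)\<^sup>2) \<le> ennreal (norm w) * J"
  proof -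
    have "ennreal (h1 * h2 * (norm w)\<^sup>2) \<le> (\<integral>\<^sup>+s. ennreal \<bar>h2 * \<phi> s - K\<bar> * indicator {a..b} s \<partial>lborel)"
      by (rule outer)
    also have "\<dots> \<le> (\<integral>\<^sup>+s. (\<integral>\<^sup>+t. ennreal \<bar>\<phi> s - \<phi> t\<bar> * indicator {b..c} t \<partial>lborel) * indicator {a..b} s \<partial>lborel)"
      by (intro nn_integral_mono mult_right_mono inner) simp
    also have "\<dots> = (\<integral>\<^sup>+z. G z \<partial>(lborel \<Otimes>\<^sub>M lborel))" by (rule ton)
    also have "\<dots> \<le> (\<integral>\<^sup>+z. ennreal (norm w) * E z \<partial>(lborel \<Otimes>\<^sub>M lborel))"
    proof (intro nn_integral_mono)
      fix z :: "real \<times> real"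
      have "\<bar>\<phi> (fst z) - \<phi> (snd z)\<bar> \<le> norm w * norm (g (fst z) - g (snd z))"
        unfolding \<phi>_def inner_diff_right[symmetric] by (rule Cauchy_Schwarz_ineq2)
      then show "G z \<le> ennreal (norm w) * E z"
        by (auto simp: G_def E_def indicator_def ennreal_mult[symmetric] intro!: ennreal_leI)
    qed
    also have "\<dots> = ennreal (norm w) * J" unfolding J_def by (rule nn_integral_cmult) (use Em in simp)
    finally show ?thesis .
  qed
  define F1 where "F1 z = ennreal (indicator R z * norm (g (fst z) - g (snd z)) / \<bar>fst z - snd z\<bar>)" for z :: "real \<times> real"
  define F2 where "F2 z = ennreal (indicator R z * \<bar>fst z - snd z\<bar>)" for z :: "real \<times> real"
  have F1m: "F1 \<in> borel_measurable (lborel \<Otimes>\<^sub>M lborel)" unfolding F1_def R_def by measurable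
  have F2m: "F2 \<in> borel_measurable (lborel \<Otimes>\<^sub>M lborel)" unfolding F2_def R_def by measurable
  have EF: "E z = F1 z * F2 z" for z
  proof (cases "fst z = snd z")
    case True then show ?thesis by (simp add: E_def F1_def F2_def)
  next
    case False
    then show ?thesis unfolding E_def F1_def F2_def
      by (simp add: ennreal_mult[symmetric] indicator_def)
  qed
  define H where "H = H12_sq a c g"
  have Hfin: "H < \<infinity>" unfolding H_def by (rule H12fin[OF gm per tor]) (use ab bc ca in auto)
  have I1: "(\<integral>\<^sup>+z. F1 z ^ 2 \<partial>(lborel \<Otimes>\<^sub>M lborel)) \<le> H"
    unfolding H_def H12_sq_def
  proof (intro nn_integral_mono)
    fix z :: "real \<times> real"
    have "F1 z ^ 2 = ennreal ((indicator R z * norm (g (fst z) - g (snd z)) / \<bar>fst z - snd z\<bar>)\<^sup>2)"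
      unfolding F1_def by (rule ennreal_power) simp
    also have "\<dots> \<le> ennreal ((norm (g (fst z) - g (snd z)))\<^sup>2 / (fst z - snd z)\<^sup>2) * indicator ({a..c}\<times>{a..c}) z"
      using ab bc by (auto simp: indicator_def R_def power_divide power2_abs)
    finally show "F1 z ^ 2 \<le> ennreal ((norm (g (fst z) - g (snd z)))\<^sup>2 / (fst z - snd z)\<^sup>2) * indicator ({a..c}\<times>{a..c}) z" .
  qed
  have I2: "(\<integral>\<^sup>+z. F2 z ^ 2 \<partial>(lborel \<Otimes>\<^sub>M lborel)) \<le> ennreal ((c - a)\<^sup>2 * (h1 * h2))"
  proof -
    have "(\<integral>\<^sup>+z. F2 z ^ 2 \<partial>(lborel \<Otimes>\<^sub>M lborel)) \<le> (\<integral>\<^sup>+z. ennreal ((c - a)\<^sup>2) * indicator R z \<partial>(lborel \<Otimes>\<^sub>M lborel))"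
    proof (intro nn_integral_mono)
      fix z :: "real \<times> real"
      have "F2 z ^ 2 = ennreal ((indicator R z * \<bar>fst z - snd z\<bar>)\<^sup>2)"
        unfolding F2_def by (rule ennreal_power) simp
      also have "\<dots> \<le> ennreal ((c - a)\<^sup>2) * indicator R z"
      proof (cases "z \<in> R")
        case True
        then have "\<bar>fst z - snd z\<bar> \<le> c - a" by (auto simp: R_def)
        then have "\<bar>fst z - snd z\<bar>\<^sup>2 \<le> (c - a)\<^sup>2" by (intro power_mono) auto
        then show ?thesis using True by (auto intro: ennreal_leI)
      qed simp
      finally show "F2 z ^ 2 \<le> ennreal ((c - a)\<^sup>2) * indicator R z" .
    qed
    also have "\<dots> = ennreal ((c - a)\<^sup>2) * emeasure (lborel \<Otimes>\<^sub>M lborel) R"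
      by (rule nn_integral_cmult_indicator) (simp add: R_def)
    also have "emeasure (lborel \<Otimes>\<^sub>M lborel) R = ennreal h1 * ennreal h2"
      unfolding R_def by (subst lborel.emeasure_pair_measure_Times) (use ab bc in \<open>auto simp: h1_def h2_def\<close>)
    finally show ?thesis using h1p h2p by (simp add: ennreal_mult[symmetric])
  qed
  have CS: "J ^ 2 \<le> H * ennreal ((c - a)\<^sup>2 * (h1 * h2))"
  proof -
    have "J ^ 2 = (\<integral>\<^sup>+z. F1 z * F2 z \<partial>(lborel \<Otimes>\<^sub>M lborel)) ^ 2" unfolding J_def EF ..
    also have "\<dots> \<le> (\<integral>\<^sup>+z. F1 z ^ 2 \<partial>(lborel \<Otimes>\<^sub>M lborel)) * (\<integral>\<^sup>+z. F2 z ^ 2 \<partial>(lborel \<Otimes>\<^sub>M lborel))"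
      by (rule Cauchy_Schwarz_nn_integral[OF F1m F2m])
    also have "\<dots> \<le> H * ennreal ((c - a)\<^sup>2 * (h1 * h2))"
      by (intro mult_mono I1 I2) auto
    finally show ?thesis .
  qed
  define Hr where "Hr = enn2real H"
  have HHr: "H = ennreal Hr" unfolding Hr_def using Hfin by simp
  have Hr0: "Hr \<ge> 0" unfolding Hr_def by simp
  have Jfin: "J \<noteq> \<infinity>"
  proof
    assume "J = \<infinity>"
    then have "J ^ 2 = \<infinity>" by simp
    moreover have "ennreal Hr * ennreal ((c - a)\<^sup>2 * (h1 * h2)) < \<infinity>" by (simp add: ennreal_mult_less_top)
    ultimately show False using CS HHr by (simp add: top_unique)
  qed
  define Jr where "Jr = enn2real J"
  have JJr: "J = ennreal Jr" unfolding Jr_def using Jfin by (simp add: less_top)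
  have Jr0: "Jr \<ge> 0" unfolding Jr_def by simp
  have r1: "h1 * h2 * (norm w)\<^sup>2 \<le> norm w * Jr"
    using A unfolding JJr by (simp add: ennreal_mult[symmetric] mult_nonneg_nonneg Jr0)
  have r2: "Jr\<^sup>2 \<le> Hr * ((c - a)\<^sup>2 * (h1 * h2))"
    using CS unfolding JJr HHr using h1p h2p Hr0
    by (simp add: ennreal_power ennreal_mult[symmetric] Jr0)
  have r0: "(norm (D1 - D2))\<^sup>2 \<le> h1 * h2 * (norm w)\<^sup>2"
    unfolding w_def by (rule vec_alg[OF h1p h2p]) (use eqn in \<open>simp add: D1_def D2_def\<close>)
  have "norm (D1 - D2) \<le> 2 * (c - a) * sqrt Hr"
    by (rule final_alg[OF r0 r1 r2]) (use h1p h2p Hr0 Jr0 ab bc in auto)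
  then show ?thesis unfolding H12_seminorm_def D1_def D2_def Hr_def H_def .
qed



lemma te_m:
  assumes "m > 0" "k \<ge> 1"
  shows "theta_ext m \<theta> (k + m) = theta_ext m \<theta> k + 1"
proof -
  have e: "k + m - 1 = (k - 1) + m" using assms by simp
  have a: "(k + m - 1) mod m = (k - 1) mod m" unfolding e by simp
  have b0: "((k - 1) + m) div m = (k - 1) div m + 1" using assms by (metis div_add_self2 neq0_conv)
  have b: "(k + m - 1) div m = (k - 1) div m + 1" using b0 e by metis
  have "theta_ext m \<theta> (k + m) = \<theta> ((k - 1) mod m + 1) + real ((k - 1) div m + 1)"
    unfolding theta_ext_def by (simp only: a b)
  then show ?thesis unfolding theta_ext_def by simp
qed

lemma te_step:
  assumes hm: "m \<ge> 2" and h0: "0 \<le> \<theta> 1"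
    and hinc: "\<And>k. 1 \<le> k \<Longrightarrow> k < m \<Longrightarrow> \<theta> k < \<theta> (k + 1)"
    and h1: "\<theta> m < 1" and k: "k \<ge> 1"
  shows "theta_ext m \<theta> k < theta_ext m \<theta> (k + 1)"
proof -
  obtain j where j: "k = Suc j" using k by (cases k) auto
  have jm: "j mod m < m" using hm by simp
  show ?thesis
  proof (cases "Suc (j mod m) = m")
    case True
    then have "Suc j mod m = 0" "Suc j div m = Suc (j div m)" using hm by (simp_all add: mod_Suc div_Suc)
    then show ?thesis unfolding theta_ext_def j using True h1 h0 by simp
  next
    case False
    then have a: "Suc j mod m = Suc (j mod m)" "Suc j div m = j div m" using hm by (simp_all add: mod_Suc div_Suc)
    have "\<theta> (j mod m + 1) < \<theta> (j mod m + 1 + 1)" using False jm by (intro hinc) auto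
    then show ?thesis unfolding theta_ext_def j using a by simp
  qed
qed

lemma te_mono:
  assumes hm: "m \<ge> 2" and h0: "0 \<le> \<theta> 1"
    and hinc: "\<And>k. 1 \<le> k \<Longrightarrow> k < m \<Longrightarrow> \<theta> k < \<theta> (k + 1)"
    and h1: "\<theta> m < 1" and p: "p \<ge> 1" and pq: "p \<le> q"
  shows "theta_ext m \<theta> p \<le> theta_ext m \<theta> q"
  using pq
proof (induction q rule: dec_induct)
  case (step n)
  then show ?case using te_step[OF hm h0 hinc h1, of n] p by simp
qed simp

lemma Delta_m:
  fixes f :: "real \<Rightarrow> 'a::real_normed_vector"
  assumes per: "\<forall>x. f (x + 1) = f x" and "m > 0" "k \<ge> 1"
  shows "Delta m \<theta> f (k + m) = Delta m \<theta> f k"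
proof -
  have "theta_ext m \<theta> (k + m + 1) = theta_ext m \<theta> (k + 1) + 1"
    using te_m[of m "k + 1" \<theta>] assms by (simp add: add_ac)
  moreover have "theta_ext m \<theta> (k + m) = theta_ext m \<theta> k + 1" using te_m assms by blast
  ultimately show ?thesis unfolding Delta_def using per by simp
qed

lemma Delta_red:
  fixes f :: "real \<Rightarrow> 'a::real_normed_vector"
  assumes per: "\<forall>x. f (x + 1) = f x" and m: "m > 0" and k: "k \<ge> 1"
  shows "Delta m \<theta> f k = Delta m \<theta> f ((k - 1) mod m + 1)"
proof -
  have gen: "Delta m \<theta> f (j + m * n) = Delta m \<theta> f j" if "j \<ge> 1" for j n
  proof (induction n)
    case (Suc n)
    have "Delta m \<theta> f (j + m * Suc n) = Delta m \<theta> f ((j + m * n) + m)" by (simp add: algebra_simps)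
    also have "\<dots> = Delta m \<theta> f (j + m * n)" using Delta_m[OF per m, of "j + m * n" \<theta>] that by simp
    finally show ?case using Suc by simp
  qed simp
  have "k = ((k - 1) mod m + 1) + m * ((k - 1) div m)" using k
    by (metis add.commute add.left_commute le_add_diff_inverse mod_mult_div_eq)
  then show ?thesis using gen[of "(k - 1) mod m + 1" "(k - 1) div m"] by simp
qed


theorem mainTheorem4:
  fixes f g :: "real \<Rightarrow> real ^ 'n" and m :: nat and \<theta> :: "nat \<Rightarrow> real"
  assumes hf: "H32_with_deriv f g"
    and hm: "m \<ge> 2"
    and h0: "0 \<le> \<theta> 1"
    and hinc: "\<And>k. 1 \<le> k \<Longrightarrow> k < m \<Longrightarrow> \<theta> k < \<theta> (k + 1)"
    and h1: "\<theta> m < 1"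
    and heq: "\<And>k. 1 \<le> k \<Longrightarrow> k \<le> m \<Longrightarrow>
               norm (Delta m \<theta> f k) = (\<Sum>j = 1..m. norm (Delta m \<theta> f j)) / real m"
  shows "\<forall>i \<ge> 1. norm (Delta m \<theta> f i - Delta m \<theta> f (i + 1))
           \<le> 2 * (theta_ext m \<theta> (i + 2) - theta_ext m \<theta> i)
               * H12_seminorm (theta_ext m \<theta> i) (theta_ext m \<theta> (i + 2)) g"
proof (intro allI impI)
  fix i :: nat assume i: "i \<ge> 1"
  have perf: "\<forall>x. f (x + 1) = f x" and perg: "\<forall>x. g (x + 1) = g x"
    and gm: "g \<in> borel_measurable lborel"
    and L2: "(\<integral>\<^sup>+ x \<in> {0..1}. ennreal ((norm (g x))\<^sup>2) \<partial>lborel) < \<infinity>"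
    and hint: "\<forall>p q. p \<le> q \<longrightarrow> (g has_integral (f q - f p)) {p..q}"
    and tor: "H12_torus_sq g < \<infinity>"
    using hf unfolding H32_with_deriv_def by auto
  have m0: "m > 0" using hm by simp
  have i2: "i + 1 + 1 = i + 2" by simp
  have ab: "theta_ext m \<theta> i < theta_ext m \<theta> (i + 1)" by (rule te_step[OF hm h0 hinc h1 i])
  have bc: "theta_ext m \<theta> (i + 1) < theta_ext m \<theta> (i + 2)"
    using te_step[OF hm h0 hinc h1, of "i + 1"] unfolding i2 by simp
  have "theta_ext m \<theta> (i + 2) \<le> theta_ext m \<theta> (i + m)"
    by (rule te_mono[OF hm h0 hinc h1]) (use i hm in auto)
  also have "\<dots> = theta_ext m \<theta> i + 1" by (rule te_m[OF m0 i])
  finally have ca: "theta_ext m \<theta> (i + 2) - theta_ext m \<theta> i \<le> 1" by simp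
  have nD: "norm (Delta m \<theta> f k) = (\<Sum>j = 1..m. norm (Delta m \<theta> f j)) / real m" if "k \<ge> 1" for k
  proof -
    have "Delta m \<theta> f k = Delta m \<theta> f ((k - 1) mod m + 1)" by (rule Delta_red[OF perf m0 that])
    moreover have "(k - 1) mod m + 1 \<le> m" using m0 by (metis Suc_eq_plus1 Suc_leI mod_less_divisor)
    ultimately show ?thesis using heq[of "(k - 1) mod m + 1"] by simp
  qed
  have eqn: "norm (f (theta_ext m \<theta> (i + 1)) - f (theta_ext m \<theta> i))
      = norm (f (theta_ext m \<theta> (i + 2)) - f (theta_ext m \<theta> (i + 1)))"
    using nD[of i] nD[of "i + 1"] i unfolding Delta_def i2 by simp
  have "norm ((f (theta_ext m \<theta> (i + 1)) - f (theta_ext m \<theta> i)) - (f (theta_ext m \<theta> (i + 2)) - f (theta_ext m \<theta> (i + 1))))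
      \<le> 2 * (theta_ext m \<theta> (i + 2) - theta_ext m \<theta> i) * H12_seminorm (theta_ext m \<theta> i) (theta_ext m \<theta> (i + 2)) g"
    by (rule main_est[OF gm perg L2 tor hint ab bc ca eqn])
  then show "norm (Delta m \<theta> f i - Delta m \<theta> f (i + 1))
           \<le> 2 * (theta_ext m \<theta> (i + 2) - theta_ext m \<theta> i)
               * H12_seminorm (theta_ext m \<theta> i) (theta_ext m \<theta> (i + 2)) g"
    unfolding Delta_def i2 .
qed

end
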